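(* Let $c,M\in\mathbb{N}$ with $c,M\ge1$, and let $A_{c,M}=(n_A)_{n\ge0}$ be defined by $0_A=1$, $n_A=1$ for $1\le n<M$, and $n_A=c$ for $n\ge M$. Then $A_{c,M}$ is a cobweb tiling sequence. (In particular, for $M=1$, the almost constant sequence $0_A=1$, $n_A=c$ for $n\ge1$, is a cobweb tiling sequence.)
   Context: Notation: $n_F\equiv F_n$. A sequence $F=(n_F)_{n\ge0}$ of natural numbers with $0_F=1$ is cobweb-admissible iff every $F$-nomial coefficient $\binom{n}{k}_F=\frac{n_F(n-1)_F\cdots(n-k+1)_F}{1_F2_F\cdots k_F}$, $0\le k\le n$, is a nonnegative integer. The cobweb poset of $F$ has, for each $s\ge1$, a level $\Phi_s$ consisting of $s_F$ distinct vertices (levels pairwise disjoint), plus a root level $\Phi_0$ with one vertex; for $x\in\Phi_i$, $y\in\Phi_j$ one has $x<y$ iff $i<j$. For $1\le a\le b$, the layer $\langle\Phi_a\to\Phi_b\rangle$ is the subposet on $\Phi_a\cup\dots\cup\Phi_b$; it has $m=b-a+1$ levels and its maximal chains form the set $\Phi_a\times\dots\times\Phi_b$. For a permutation $\sigma$ of $\{1,\dots,m\}$, a block of type $\sigma P_m$ in this layer is the subposet induced on $V_a\cup\dots\cup V_b$ where $V_{a-1+i}\subseteq\Phi_{a-1+i}$ and $|V_{a-1+i}|=\sigma(i)_F$ for $i=1,\dots,m$; its maximal chains form the set $V_a\times\dots\times V_b$. A tiling of the layer is a finite family of such blocks ($\sigma$ may vary from block to block) whose sets $V_a\times\dots\times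 V_b$ partition $\Phi_a\times\dots\times\Phi_b$ (pairwise max-disjoint and covering all maximal chains). A cobweb tiling sequence is a cobweb-admissible sequence $F$ such that for all $1\le a\le b$ the layer $\langle\Phi_a\to\Phi_b\rangle$ admits a tiling by blocks of type $\sigma P_{b-a+1}$. *)

theory Defs
  imports "HOL-Combinatorics.Permutations" "HOL-Library.FuncSet"
begin

definition fnom_num :: "(nat \<Rightarrow> nat) \<Rightarrow> nat \<Rightarrow> nat \<Rightarrow> nat" where
  "fnom_num F n k = (\<Prod>i<k. F (n - i))"

definition fnom_den :: "(nat \<Rightarrow> nat) \<Rightarrow> nat \<Rightarrow> nat" where
  "fnom_den F k = (\<Prod>i\<in>{1..k}. F i)"

definition cobweb_admissible :: "(nat \<Rightarrow> nat) \<Rightarrow> bool" where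
  "cobweb_admissible F \<longleftrightarrow> F 0 = 1 \<and>
     (\<forall>n k. k \<le> n \<longrightarrow> fnom_den F k \<noteq> 0 \<and> fnom_den F k dvd fnom_num F n k)"

text \<open>Vertices of level s are the pairs (s, j) with j < s_F; so levels are disjoint.
  A maximal chain of the layer from level a to level b is encoded as a function
  mapping each level i in {a..b} to the index j of its vertex in that level.\<close>
definition layer_chains :: "(nat \<Rightarrow> nat) \<Rightarrow> nat \<Rightarrow> nat \<Rightarrow> (nat \<Rightarrow> nat) set" where
  "layer_chains F a b = (\<Pi>\<^sub>E i\<in>{a..b}. {..<F i})"

text \<open>A block of type sigma P_m (m = b - a + 1) in the layer: given by its vertex sets
  V i \<subseteq> level i for i in {a..b}, with |V (a-1+i)| = (sigma i)_F for some permutation sigma of {1..m}.\<close>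
definition is_block :: "(nat \<Rightarrow> nat) \<Rightarrow> nat \<Rightarrow> nat \<Rightarrow> (nat \<Rightarrow> nat set) \<Rightarrow> bool" where
  "is_block F a b V \<longleftrightarrow> V \<in> extensional {a..b} \<and>
     (\<exists>\<sigma>. \<sigma> permutes {1..b - a + 1} \<and>
        (\<forall>i\<in>{1..b - a + 1}. V (a - 1 + i) \<subseteq> {..<F (a - 1 + i)} \<and>
                            card (V (a - 1 + i)) = F (\<sigma> i)))"

definition block_chains :: "nat \<Rightarrow> nat \<Rightarrow> (nat \<Rightarrow> nat set) \<Rightarrow> (nat \<Rightarrow> nat) set" where
  "block_chains a b V = (\<Pi>\<^sub>E i\<in>{a..b}. V i)"

definition is_tiling :: "(nat \<Rightarrow> nat) \<Rightarrow> nat \<Rightarrow> nat \<Rightarrow> (nat \<Rightarrow> nat set) set \<Rightarrow> bool" where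
  "is_tiling F a b T \<longleftrightarrow> finite T \<and> (\<forall>V\<in>T. is_block F a b V) \<and>
     (\<forall>V\<in>T. \<forall>W\<in>T. V \<noteq> W \<longrightarrow> block_chains a b V \<inter> block_chains a b W = {}) \<and>
     (\<Union>V\<in>T. block_chains a b V) = layer_chains F a b"

definition cobweb_tiling_sequence :: "(nat \<Rightarrow> nat) \<Rightarrow> bool" where
  "cobweb_tiling_sequence F \<longleftrightarrow> cobweb_admissible F \<and>
     (\<forall>a b. 1 \<le> a \<and> a \<le> b \<longrightarrow> (\<exists>T. is_tiling F a b T))"

definition seqA :: "nat \<Rightarrow> nat \<Rightarrow> nat \<Rightarrow> nat" where
  "seqA c M n = (if n = 0 then 1 else if n < M then 1 else c)"

end

theory Submission imports Defs begin
lemma seqA_dvd: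
  assumes "1 \<le> i" "i \<le> j"
  shows "seqA c M i dvd seqA c M j"
  using assms by (auto simp: seqA_def)

lemma den: "(\<Prod>i\<in>{1..k}. F i) = (\<Prod>i<k. (F (Suc i)::nat))"
proof -
  have "{1..k} = Suc ` {..<k}" by (auto simp: image_iff) (metis Suc_pred' lessThan_iff not_less_eq_eq zero_less_Suc less_Suc_eq_le gr0I)
  then show ?thesis by (simp add: prod.reindex)
qed

lemma adm:
  assumes "1 \<le> c"
  shows "cobweb_admissible (seqA c M)"
  unfolding cobweb_admissible_def
proof (intro conjI allI impI)
  show "seqA c M 0 = 1" by (simp add: seqA_def)
  fix n k :: nat assume kn: "k \<le> n"
  have den: "fnom_den (seqA c M) k = (\<Prod>i<k. seqA c M (Suc i))"
    unfolding fnom_den_def by (rule den)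
  show "fnom_den (seqA c M) k \<noteq> 0"
    unfolding den using assms by (auto simp: seqA_def)
  define h where "h j = seqA c M (n - k + 1 + j)" for j
  have num: "fnom_num (seqA c M) n k = (\<Prod>i<k. h (k - Suc i))"
    unfolding fnom_num_def h_def
    by (rule prod.cong) (use kn in \<open>auto intro!: arg_cong[where f="seqA c M"]\<close>)
  also have "\<dots> = (\<Prod>i<k. h i)" by (rule prod.nat_diff_reindex)
  finally have num2: "fnom_num (seqA c M) n k = (\<Prod>i<k. h i)" .
  show "fnom_den (seqA c M) k dvd fnom_num (seqA c M) n k"
    unfolding den num2
    by (rule prod_dvd_prod) (use kn in \<open>auto simp: h_def intro!: seqA_dvd\<close>)
qed
definition blk :: "nat \<Rightarrow> nat \<Rightarrow> nat \<Rightarrow> nat \<Rightarrow> (nat \<Rightarrow> nat) \<Rightarrow> nat \<Rightarrow> nat set" where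
  "blk c M a b x = restrict (\<lambda>l. if M + a \<le> l + 1 then {..<seqA c M l} else {x l}) {a..b}"

theorem mainTheorem9:
  fixes c M :: nat
  assumes "1 \<le> c" and "1 \<le> M"
  shows "cobweb_tiling_sequence (seqA c M)"
  unfolding cobweb_tiling_sequence_def
proof (intro conjI allI impI)
  show "cobweb_admissible (seqA c M)" using adm assms(1) .
  fix a b :: nat assume ab: "1 \<le> a \<and> a \<le> b"
  let ?F = "seqA c M"
  let ?L = "layer_chains ?F a b"
  let ?T = "blk c M a b ` ?L"
  have blockx: "is_block ?F a b (blk c M a b x)" if x: "x \<in> ?L" for x
    unfolding is_block_def
  proof (intro conjI exI[of _ id] ballI)
    show "blk c M a b x \<in> extensional {a..b}" by (simp add: blk_def)
    show "id permutes {1..b - a + 1}" by (rule permutes_id)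
    fix i assume i: "i \<in> {1..b - a + 1}"
    have l: "a - 1 + i \<in> {a..b}" using i ab by auto
    have xl: "x (a - 1 + i) < ?F (a - 1 + i)" using x l by (auto simp: layer_chains_def PiE_iff)
    show "blk c M a b x (a - 1 + i) \<subseteq> {..<?F (a - 1 + i)}"
      using l xl by (auto simp: blk_def)
    show "card (blk c M a b x (a - 1 + i)) = ?F (id i)"
      using l i ab by (auto simp: blk_def seqA_def)
  qed
  have sub: "block_chains a b (blk c M a b x) \<subseteq> ?L" if x: "x \<in> ?L" for x
  proof
    fix z assume z: "z \<in> block_chains a b (blk c M a b x)"
    show "z \<in> ?L" unfolding layer_chains_def PiE_iff
    proof (intro conjI ballI)
      show "z \<in> extensional {a..b}" using z by (simp add: block_chains_def PiE_iff)
      fix i assume i: "i \<in> {a..b}"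
      have "z i \<in> (if M + a \<le> i + 1 then {..<seqA c M i} else {x i})"
        using z i by (simp add: block_chains_def PiE_iff blk_def)
      moreover have "x i < seqA c M i" using x i by (simp add: layer_chains_def PiE_iff)
      ultimately show "z i \<in> {..<seqA c M i}" by (auto split: if_splits)
    qed
  qed
  have self: "x \<in> block_chains a b (blk c M a b x)" if x: "x \<in> ?L" for x
    using x by (auto simp: block_chains_def layer_chains_def blk_def PiE_iff)
  have eq: "blk c M a b x = blk c M a b y"
    if z: "z \<in> block_chains a b (blk c M a b x)" "z \<in> block_chains a b (blk c M a b y)" for x y z
  proof
    fix l
    show "blk c M a b x l = blk c M a b y l"
    proof (cases "l \<in> {a..b} \<and> \<not> M + a \<le> l + 1")
      case True
      have "z l \<in> blk c M a b x l" "z l \<in> blk c M a b y l" using z True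
        by (auto simp: block_chains_def PiE_iff)
      then have "z l \<in> {x l}" "z l \<in> {y l}" using True
        by (simp_all add: blk_def)
      then show ?thesis using True by (auto simp: blk_def)
    next
      case False then show ?thesis by (auto simp: blk_def)
    qed
  qed
  have "is_tiling ?F a b ?T"
    unfolding is_tiling_def
  proof (intro conjI ballI impI)
    show "finite ?T" by (auto simp: layer_chains_def intro!: finite_PiE)
    show "\<And>V. V \<in> ?T \<Longrightarrow> is_block ?F a b V" using blockx by auto
    show "\<And>V W. V \<in> ?T \<Longrightarrow> W \<in> ?T \<Longrightarrow> V \<noteq> W \<Longrightarrow> block_chains a b V \<inter> block_chains a b W = {}"
      using eq by blast
    show "(\<Union>V\<in>?T. block_chains a b V) = ?L"
      using sub self by blast
  qed
  then show "\<exists>T. is_tiling ?F a b T" by blast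
qed

end
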